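(* In the sleeping bandits problem described in the context, SB-EXP3 with $\eta_{q,t}=2\gamma_t=\sqrt{\frac{\ln(3K/\delta)}{\sum_{s=1}^t|\mathbb A_s|}}$ guarantees that, for any horizon $T$, with probability $1-\delta$, $$\max_{a\in[K]}\mathrm{Regret}(a)\le O\left(\sqrt{\ln(K/\delta)\sum_{t=1}^T|\mathbb A_t|}\right).$$
   Context: Sleeping bandits with $K$ arms: in each round $t=1,2,\dots,T$, an adaptive adversary reveals a nonempty set $\mathbb A_t\subseteq[K]$ of active arms and selects hidden losses $h_{i,t}\in[0,1]$; the learner pulls an active arm $i_t\in\mathbb A_t$ and observes only $h_{i_t,t}$. With $I_{i,t}=\mathbb 1\{i\in\mathbb A_t\}$, the per-action regret is $\mathrm{Regret}(a)=\sum_{t=1}^TI_{a,t}(h_{i_t,t}-h_{a,t})$. SB-EXP3: with IX-loss estimates $\tilde h_{i,s}=\frac{h_{i,s}\mathbb 1\{i_s=i\}}{q_{i,s}+\gamma_s}$, set $\tilde q_{i,1}=1$ and for $t\ge2$, $\tilde q_{i,t}=\exp\big(\eta_{q,t}\sum_{s=1}^{t-1}I_{i,s}(h_{i_s,s}-\tilde h_{i,s}-\gamma_s\sum_{j\in\mathbb A_s}\tilde h_{j,s})\big)$; play $i_t\sim q_t$ where $q_{i,t}=\frac{I_{i,t}\tilde q_{i,t}}{\sum_jI_{j,t}\tilde q_{j,t}}$. The rates $\eta_{q,t},\gamma_t$ are chosen after $\mathbb A_t$ is revealed. *)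

theory Defs
  imports "HOL-Probability.Probability"
begin

text \<open>A deterministic adaptive adversary is given by
  Adv t hist (active set at round t) and Loss t hist i (loss of arm i at round t),
  where hist is the list of arms pulled in rounds 1..t-1.
  A full history xs lists the pulls: xs ! (t-1) is the arm pulled in round t.\<close>

definition act :: "(nat \<Rightarrow> nat list \<Rightarrow> nat set) \<Rightarrow> nat \<Rightarrow> nat list \<Rightarrow> nat set" where
  "act Adv t xs = Adv t (take (t - 1) xs)"

definition lossv :: "(nat \<Rightarrow> nat list \<Rightarrow> nat \<Rightarrow> real) \<Rightarrow> nat \<Rightarrow> nat list \<Rightarrow> nat \<Rightarrow> real" where
  "lossv Loss t xs i = Loss t (take (t - 1) xs) i"

definition sb_eta :: "nat \<Rightarrow> real \<Rightarrow> (nat \<Rightarrow> nat list \<Rightarrow> nat set) \<Rightarrow> nat \<Rightarrow> nat list \<Rightarrow> real" where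
  "sb_eta K \<delta> Adv t xs =
     sqrt (ln (3 * real K / \<delta>) / (\<Sum>s = 1..t. real (card (act Adv s xs))))"

definition sb_gamma :: "nat \<Rightarrow> real \<Rightarrow> (nat \<Rightarrow> nat list \<Rightarrow> nat set) \<Rightarrow> nat \<Rightarrow> nat list \<Rightarrow> real" where
  "sb_gamma K \<delta> Adv t xs = sb_eta K \<delta> Adv t xs / 2"

text \<open>Sampling probabilities q_{i,t} given the cumulative exponent sums cum i
  = sum_{s<t} I_{i,s}(h_{i_s,s} - h~_{i,s} - gamma_s sum_{j in A_s} h~_{j,s}).\<close>
definition sb_qprob :: "nat \<Rightarrow> real \<Rightarrow> (nat \<Rightarrow> nat list \<Rightarrow> nat set) \<Rightarrow> (nat \<Rightarrow> real)
    \<Rightarrow> nat \<Rightarrow> nat list \<Rightarrow> nat \<Rightarrow> real" where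
  "sb_qprob K \<delta> Adv cum t xs i =
     (if i \<in> act Adv t xs then
        exp (sb_eta K \<delta> Adv t xs * cum i) /
          (\<Sum>j\<in>act Adv t xs. exp (sb_eta K \<delta> Adv t xs * cum j))
      else 0)"

primrec sb_cum :: "nat \<Rightarrow> real \<Rightarrow> (nat \<Rightarrow> nat list \<Rightarrow> nat set) \<Rightarrow> (nat \<Rightarrow> nat list \<Rightarrow> nat \<Rightarrow> real)
    \<Rightarrow> nat list \<Rightarrow> nat \<Rightarrow> nat \<Rightarrow> real" where
  "sb_cum K \<delta> Adv Loss xs 0 = (\<lambda>i. 0)"
| "sb_cum K \<delta> Adv Loss xs (Suc t) =
     (let s = Suc t;
          q = sb_qprob K \<delta> Adv (sb_cum K \<delta> Adv Loss xs t) s xs;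
          g = sb_gamma K \<delta> Adv s xs;
          hest = (\<lambda>j. lossv Loss s xs j * (if xs ! t = j then 1 else 0) / (q j + g))
      in (\<lambda>i. sb_cum K \<delta> Adv Loss xs t i +
               (if i \<in> act Adv s xs then
                  lossv Loss s xs (xs ! t) - hest i - g * (\<Sum>j\<in>act Adv s xs. hest j)
                else 0)))"

definition sb_q :: "nat \<Rightarrow> real \<Rightarrow> (nat \<Rightarrow> nat list \<Rightarrow> nat set) \<Rightarrow> (nat \<Rightarrow> nat list \<Rightarrow> nat \<Rightarrow> real)
    \<Rightarrow> nat \<Rightarrow> nat list \<Rightarrow> nat \<Rightarrow> real" where
  "sb_q K \<delta> Adv Loss t xs i = sb_qprob K \<delta> Adv (sb_cum K \<delta> Adv Loss xs (t - 1)) t xs i"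

definition sb_pmf :: "nat \<Rightarrow> real \<Rightarrow> (nat \<Rightarrow> nat list \<Rightarrow> nat set) \<Rightarrow> (nat \<Rightarrow> nat list \<Rightarrow> nat \<Rightarrow> real)
    \<Rightarrow> nat \<Rightarrow> nat list \<Rightarrow> nat pmf" where
  "sb_pmf K \<delta> Adv Loss t xs = embed_pmf (sb_q K \<delta> Adv Loss t xs)"

primrec sb_hist :: "nat \<Rightarrow> real \<Rightarrow> (nat \<Rightarrow> nat list \<Rightarrow> nat set) \<Rightarrow> (nat \<Rightarrow> nat list \<Rightarrow> nat \<Rightarrow> real)
    \<Rightarrow> nat \<Rightarrow> nat list pmf" where
  "sb_hist K \<delta> Adv Loss 0 = return_pmf []"
| "sb_hist K \<delta> Adv Loss (Suc t) =
     bind_pmf (sb_hist K \<delta> Adv Loss t)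
       (\<lambda>xs. map_pmf (\<lambda>i. xs @ [i]) (sb_pmf K \<delta> Adv Loss (Suc t) xs))"

definition regret :: "(nat \<Rightarrow> nat list \<Rightarrow> nat set) \<Rightarrow> (nat \<Rightarrow> nat list \<Rightarrow> nat \<Rightarrow> real)
    \<Rightarrow> nat \<Rightarrow> nat list \<Rightarrow> nat \<Rightarrow> real" where
  "regret Adv Loss T xs a =
     (\<Sum>t = 1..T. (if a \<in> act Adv t xs then lossv Loss t xs (xs ! (t - 1)) - lossv Loss t xs a else 0))"

end

theory Submission
  imports Defs
begin

lemma exp_quad_bound:
  fixes y :: real assumes "y \<le> 1" shows "exp y \<le> 1 + y + y^2"
proof (cases "0 \<le> y")
  case True thus ?thesis using exp_bound[of y] assms by simp
next
  case False
  define u where "u = - y"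
  have u: "0 < u" using False u_def by simp
  have e: "1 + u + u^2/2 \<le> exp u" using exp_lower_Taylor_quadratic[of u] u by simp
  have "exp y = 1 / exp u" by (simp add: u_def exp_minus field_simps)
  also have "\<dots> \<le> 1 / (1 + u + u^2/2)"
    using e u by (intro divide_left_mono) (auto simp: add_pos_nonneg)
  also have "\<dots> \<le> 1 - u + u^2"
  proof -
    have p: "0 < 1 + u + u^2/2" using u by (simp add: add_pos_nonneg)
    have eq: "(1 - u + u^2) * (1 + u + u^2/2) = 1 + u^2/2 + u^3/2 + u^4/2"
      by (simp add: eval_nat_numeral field_simps)
    have "0 \<le> u^2/2 + u^3/2 + u^4/2" using u by simp
    hence "1 \<le> (1 - u + u^2) * (1 + u + u^2/2)" using eq by linarith
    thus ?thesis using p by (simp add: divide_le_eq mult.commute)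
  qed
  finally show ?thesis by (simp add: u_def)
qed

lemma ln_lower_frac:
  fixes z :: real assumes "0 \<le> z" shows "z / (1 + z) \<le> ln (1 + z)"
proof -
  have p: "0 < 1 + z" using assms by simp
  have "ln (1 / (1 + z)) \<le> 1 / (1 + z) - 1" using ln_bound[of "1/(1+z)"] ln_le_minus_one p
    by simp
  moreover have "ln (1 / (1 + z)) = - ln (1 + z)" using p by (simp add: ln_div)
  moreover have "1 / (1 + z) - 1 = - (z / (1+z))" using p by (simp add: field_simps)
  ultimately show ?thesis by simp
qed

lemma ix_round:
  fixes A :: "nat set" and q w l :: "nat \<Rightarrow> real" and g :: real
  assumes fin: "finite A" and qpos: "\<And>i. i \<in> A \<Longrightarrow> 0 < q i" and qsum: "sum q A = 1"
    and g: "0 < g" and w: "\<And>j. j \<in> A \<Longrightarrow> 0 \<le> w j \<and> w j \<le> g"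
    and l: "\<And>j. j \<in> A \<Longrightarrow> 0 \<le> l j \<and> l j \<le> 1"
  shows "(\<Sum>i\<in>A. q i * exp (\<Sum>j\<in>A. w j * (l j * (if i = j then 1 else 0) / (q j + g) - l j))) \<le> 1"
proof -
  define W where "W = (\<Sum>j\<in>A. w j * l j)"
  have W0: "0 \<le> W" unfolding W_def using w l by (intro sum_nonneg) auto
  have inner: "(\<Sum>j\<in>A. w j * (l j * (if i = j then 1 else 0) / (q j + g) - l j)) = w i * l i / (q i + g) - W"
    if i: "i \<in> A" for i
  proof -
    have "(\<Sum>j\<in>A. w j * (l j * (if i = j then 1 else 0) / (q j + g) - l j))
       = (\<Sum>j\<in>A. w j * (l j * (if i = j then 1 else 0) / (q j + g))) - W"
      unfolding W_def by (simp add: right_diff_distrib sum_subtractf)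
    also have "(\<Sum>j\<in>A. w j * (l j * (if i = j then 1 else 0) / (q j + g)))
       = (\<Sum>j\<in>A. if i = j then w i * l i / (q i + g) else 0)"
      by (rule sum.cong) auto
    also have "\<dots> = w i * l i / (q i + g)" using i fin by simp
    finally show ?thesis .
  qed
  have bnd: "q i * exp (w i * l i / (q i + g) - W) \<le> (q i + w i * l i) * exp (- W)" if i: "i \<in> A" for i
  proof -
    have qi: "0 < q i" using qpos i by simp
    have wl0: "0 \<le> w i * l i" using w[OF i] l[OF i] by simp
    have wlg: "w i * l i \<le> g" using w[OF i] l[OF i] by (metis mult_left_le mult.commute order_trans)
    define z where "z = w i * l i / q i"
    have z0: "0 \<le> z" unfolding z_def using wl0 qi by simp
    have "w i * l i / (q i + g) \<le> w i * l i / (q i + w i * l i)"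
      using wl0 wlg qi by (intro divide_left_mono) (auto simp: add_pos_nonneg mult_pos_pos)
    also have "\<dots> = z / (1 + z)" unfolding z_def using qi by (simp add: field_simps)
    also have "\<dots> \<le> ln (1 + z)" by (rule ln_lower_frac[OF z0])
    finally have "exp (w i * l i / (q i + g)) \<le> 1 + z"
      using z0 by (metis exp_ln exp_le_cancel_iff add_pos_nonneg zero_less_one)
    hence "q i * exp (w i * l i / (q i + g)) \<le> q i * (1 + z)" using qi by simp
    also have "\<dots> = q i + w i * l i" unfolding z_def using qi by (simp add: field_simps)
    finally show ?thesis by (simp add: exp_diff exp_minus divide_right_mono field_simps)
  qed
  have "(\<Sum>i\<in>A. q i * exp (\<Sum>j\<in>A. w j * (l j * (if i = j then 1 else 0) / (q j + g) - l j)))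
       = (\<Sum>i\<in>A. q i * exp (w i * l i / (q i + g) - W))"
    using inner by (intro sum.cong) auto
  also have "\<dots> \<le> (\<Sum>i\<in>A. (q i + w i * l i) * exp (- W))" using bnd by (intro sum_mono) auto
  also have "\<dots> = (1 + W) * exp (- W)" unfolding W_def by (simp add: sum_distrib_right[symmetric] sum.distrib qsum)
  also have "\<dots> \<le> 1"
  proof -
    have "1 + W \<le> exp W" by (rule exp_ge_add_one_self)
    thus ?thesis by (simp add: exp_minus field_simps)
  qed
  finally show ?thesis .
qed

lemma pot_round:
  fixes A :: "nat set" and q :: "nat \<Rightarrow> real"
  assumes fin: "finite A" and k: "k \<in> A" and qnn: "\<And>i. i \<in> A \<Longrightarrow> 0 \<le> q i" and qsum: "sum q A = 1"
    and g: "0 < g" and l: "0 \<le> l" "l \<le> 1" and e: "0 < e" "e \<le> 1"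
  shows "(\<Sum>i\<in>A. q i * exp (e * (l - (if i = k then l / (q k + g) else 0) - g * (l / (q k + g)))))
         \<le> exp (e * (e * (1 + l / (q k + g))))"
proof -
  define hk where "hk = l / (q k + g)"
  define x where "x i = l - (if i = k then hk else 0) - g * hk" for i
  have qk: "0 \<le> q k" using qnn k by simp
  have pg: "0 < q k + g" using qk g by simp
  have hk0: "0 \<le> hk" unfolding hk_def using l pg by simp
  have ghk: "g * hk \<le> l"
  proof -
    have "g * hk = l * (g / (q k + g))" unfolding hk_def by simp
    also have "\<dots> \<le> l * 1" using l qk g by (intro mult_left_mono) auto
    finally show ?thesis by simp
  qed
  have ghk0: "0 \<le> g * hk" using g hk0 by simp
  have x1: "x i \<le> 1" for i unfolding x_def using hk0 ghk0 l by auto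
  have ex: "exp (e * x i) \<le> 1 + e * x i + (e * x i)^2" for i
  proof (rule exp_quad_bound)
    show "e * x i \<le> 1"
    proof (cases "0 \<le> x i")
      case True thus ?thesis using e x1[of i] by (metis mult_le_one)
    next
      case False thus ?thesis using e mult_pos_neg[of e "x i"] by simp
    qed
  qed
  have qk1: "q k \<le> 1" using member_le_sum[of k A q] qsum k fin qnn by auto
  have s1: "(\<Sum>i\<in>A. q i * x i) = 0"
  proof -
    have "(\<Sum>i\<in>A. q i * x i) = (\<Sum>i\<in>A. q i * (l - g * hk)) - (\<Sum>i\<in>A. if i = k then q k * hk else 0)"
    proof -
      have "q i * x i = q i * (l - g * hk) - (if i = k then q k * hk else 0)" for i
        unfolding x_def by (auto simp: algebra_simps)
      thus ?thesis by (simp add: sum_subtractf)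
    qed
    also have "\<dots> = (l - g * hk) - q k * hk" using fin k qsum by (simp add: sum_distrib_right[symmetric])
    also have "\<dots> = l - hk * (q k + g)" by (simp add: algebra_simps)
    also have "\<dots> = 0" unfolding hk_def using pg by simp
    finally show ?thesis .
  qed
  have s2: "(\<Sum>i\<in>A. q i * (x i)^2) \<le> 1 + hk"
  proof -
    have split: "(\<Sum>i\<in>A. q i * (x i)^2) = q k * (x k)^2 + (\<Sum>i\<in>A - {k}. q i * (x i)^2)"
      using fin k by (simp add: sum.remove)
    have a: "(\<Sum>i\<in>A - {k}. q i * (x i)^2) \<le> (\<Sum>i\<in>A - {k}. q i)"
    proof (intro sum_mono)
      fix i assume i: "i \<in> A - {k}"
      have xi: "x i = l - g * hk" using i unfolding x_def by simp
      have "0 \<le> x i" "x i \<le> 1" using xi ghk l ghk0 by auto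
      hence "(x i)^2 \<le> 1" by (simp add: power_le_one)
      thus "q i * (x i)^2 \<le> q i" using qnn i by (metis DiffD1 mult_left_le)
    qed
    have b: "(\<Sum>i\<in>A - {k}. q i) \<le> 1"
    proof -
      have "(\<Sum>i\<in>A - {k}. q i) = 1 - q k" using qsum fin k by (simp add: sum_diff1)
      thus ?thesis using qk by simp
    qed
    have c: "q k * (x k)^2 \<le> hk"
    proof -
      have xk0: "x k = l - (1 + g) * hk" unfolding x_def by (simp add: algebra_simps)
      have xk: "x k = l * (1 - q k) / (q k + g) * (-1)" unfolding xk0 hk_def using pg
        by (simp add: divide_simps) (simp add: algebra_simps)
      have "q k * (x k)^2 = q k * (l^2 * (1 - q k)^2 / (q k + g)^2)"
        unfolding xk by (simp add: power_divide power_mult_distrib)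
      also have "\<dots> = (q k * l * (1 - q k)^2) * (l / (q k + g)^2)"
        by (simp add: power2_eq_square)
      also have "\<dots> \<le> (q k + g) * (l / (q k + g)^2)"
      proof (rule mult_right_mono)
        have "(1 - q k)^2 \<le> 1" using qk qk1 by (simp add: power_le_one)
        hence "l * (1 - q k)^2 \<le> 1" using l by (intro mult_le_one) auto
        hence "q k * (l * (1 - q k)^2) \<le> q k" using qk by (rule mult_left_le)
        hence "q k * l * (1 - q k)^2 \<le> q k" by (simp add: mult.assoc)
        thus "q k * l * (1 - q k)^2 \<le> q k + g" using qk1 qk g by linarith
        show "0 \<le> l / (q k + g)^2" using l by simp
      qed
      also have "\<dots> = hk" unfolding hk_def using pg by (simp add: power2_eq_square)
      finally show ?thesis .
    qed
    show ?thesis using split a b c by linarith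
  qed
  have "(\<Sum>i\<in>A. q i * exp (e * x i)) \<le> (\<Sum>i\<in>A. q i * (1 + e * x i + (e * x i)^2))"
    using qnn ex by (intro sum_mono mult_left_mono) auto
  also have "\<dots> = (\<Sum>i\<in>A. q i) + e * (\<Sum>i\<in>A. q i * x i) + e^2 * (\<Sum>i\<in>A. q i * (x i)^2)"
    by (simp add: sum.distrib sum_distrib_left algebra_simps power_mult_distrib)
  also have "\<dots> \<le> 1 + e^2 * (1 + hk)" using s1 s2 qsum e by (simp add: mult_left_mono)
  also have "\<dots> \<le> exp (e^2 * (1 + hk))" by (rule exp_ge_add_one_self[simplified add.commute])
  finally show ?thesis unfolding x_def hk_def by (simp add: power2_eq_square mult.assoc)
qed

lemma power_mean_exp:
  fixes I :: "nat set" and y :: "nat \<Rightarrow> real"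
  assumes fin: "finite I" and ne: "I \<noteq> {}" and e': "0 < e'" and ee: "e' \<le> e"
  shows "ln (\<Sum>i\<in>I. exp (e' * y i)) / e' \<le> ln (\<Sum>i\<in>I. exp (e * y i)) / e + ln (card I) * (1 / e' - 1 / e)"
proof -
  define K where "K = real (card I)"
  have K: "0 < K" unfolding K_def using fin ne by (simp add: card_gt_0_iff)
  have e: "0 < e" using e' ee by simp
  define r where "r = e' / e"
  have r0: "0 < r" and r1: "r \<le> 1" unfolding r_def using e' ee e by auto
  define P where "P = (\<Sum>i\<in>I. exp (e * y i))"
  have P: "0 < P" unfolding P_def using fin ne by (intro sum_pos) auto
  define M where "M = P / K"
  have M: "0 < M" unfolding M_def using P K by simp
  define m where "m = ln M"
  have pt: "exp (e' * y i) \<le> exp (r * m) * ((1 - r) + r * (exp (e * y i) / M))" for i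
  proof -
    have cv: "exp ((1 - r) * 0 + r * (e * y i - m)) \<le> (1 - r) * exp 0 + r * exp (e * y i - m)"
      using convex_onD[OF exp_convex, of r 0 "e * y i - m"] r0 r1 by simp
    have "e' * y i = r * m + ((1 - r) * 0 + r * (e * y i - m))" unfolding r_def using e
      by (simp add: field_simps)
    hence "exp (e' * y i) = exp (r * m) * exp ((1 - r) * 0 + r * (e * y i - m))"
      by (simp add: exp_add[symmetric])
    also have "\<dots> \<le> exp (r * m) * ((1 - r) * exp 0 + r * exp (e * y i - m))"
      using cv by (intro mult_left_mono) auto
    also have "exp (e * y i - m) = exp (e * y i) / M" unfolding m_def using M by (simp add: exp_diff)
    finally show ?thesis by simp
  qed
  have "(\<Sum>i\<in>I. exp (e' * y i)) \<le> (\<Sum>i\<in>I. exp (r * m) * ((1 - r) + r * (exp (e * y i) / M)))"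
    using pt by (intro sum_mono) auto
  also have "\<dots> = exp (r * m) * ((1 - r) * K + r * (P / M))"
    unfolding P_def K_def by (simp add: sum_distrib_left[symmetric] sum.distrib sum_divide_distrib[symmetric])
  also have "(1 - r) * K + r * (P / M) = K" unfolding M_def using K P by (simp add: field_simps)
  finally have le: "(\<Sum>i\<in>I. exp (e' * y i)) \<le> exp (r * m) * K" .
  have pos: "0 < (\<Sum>i\<in>I. exp (e' * y i))" using fin ne by (intro sum_pos) auto
  have "ln (\<Sum>i\<in>I. exp (e' * y i)) \<le> ln (exp (r * m) * K)"
    using le pos by (subst ln_le_cancel_iff) (auto simp: K)
  also have "\<dots> = r * m + ln K" using K by (simp add: ln_mult)
  also have "m = ln P - ln K" unfolding m_def M_def using P K by (simp add: ln_div)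
  finally have L: "ln (\<Sum>i\<in>I. exp (e' * y i)) \<le> r * (ln P - ln K) + ln K" .
  have "ln (\<Sum>i\<in>I. exp (e' * y i)) / e' \<le> (r * (ln P - ln K) + ln K) / e'"
    using L e' by (simp add: divide_right_mono)
  also have "\<dots> = ln P / e + ln K * (1 / e' - 1 / e)" unfolding r_def using e e'
    by (simp add: field_simps)
  finally show ?thesis unfolding P_def K_def .
qed

lemma potential_bound:
  fixes K :: nat and A :: "nat \<Rightarrow> nat set" and eta B :: "nat \<Rightarrow> real"
    and c x :: "nat \<Rightarrow> nat \<Rightarrow> real"
  assumes K: "1 \<le> K"
    and Asub: "\<And>t. A t \<subseteq> {1..K}" and Ane: "\<And>t. A t \<noteq> {}"
    and epos: "\<And>t. 1 \<le> t \<Longrightarrow> 0 < eta t"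
    and emono: "\<And>t. 1 \<le> t \<Longrightarrow> eta (Suc t) \<le> eta t"
    and c0: "\<And>i. c 0 i = 0"
    and cS: "\<And>t i. c (Suc t) i = c t i + (if i \<in> A (Suc t) then x (Suc t) i else 0)"
    and x1: "\<And>t i. x t i \<le> 1"
    and B0: "\<And>t. 0 \<le> B t"
    and step: "\<And>t. 1 \<le> t \<Longrightarrow> t \<le> T \<Longrightarrow> eta t \<le> 1 \<Longrightarrow>
       (\<Sum>i\<in>A t. exp (eta t * c (t - 1) i) / (\<Sum>j\<in>A t. exp (eta t * c (t - 1) j)) * exp (eta t * x t i))
         \<le> exp (eta t * B t)"
    and a: "a \<in> {1..K}" and T: "1 \<le> T"
  shows "c T a \<le> ln K / eta T + (\<Sum>t = 1..T. if eta t \<le> 1 then B t else 1)"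
proof -
  define Ar where "Ar = {1..K}"
  have finAr: "finite Ar" and neAr: "Ar \<noteq> {}" unfolding Ar_def using K by auto
  have cardAr: "card Ar = K" unfolding Ar_def by simp
  define D where "D t = (if eta t \<le> 1 then B t else 1)" for t
  define Phi where "Phi t e = (\<Sum>i\<in>Ar. exp (e * c t i))" for t e
  have Phipos: "0 < Phi t e" for t e unfolding Phi_def using finAr neAr by (intro sum_pos) auto
  have stepA: "Phi (Suc t) (eta (Suc t)) \<le> exp (eta (Suc t) * D (Suc t)) * Phi t (eta (Suc t))"
    if tT: "Suc t \<le> T" for t
  proof -
    define e where "e = eta (Suc t)"
    have e: "0 < e" unfolding e_def using epos by simp
    show ?thesis
    proof (cases "e \<le> 1")
      case False
      have "Phi (Suc t) e \<le> (\<Sum>i\<in>Ar. exp (e * 1) * exp (e * c t i))"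
        unfolding Phi_def
      proof (intro sum_mono)
        fix i
        have "c (Suc t) i \<le> c t i + 1" using cS[of t i] x1[of "Suc t" i] by auto
        hence "e * c (Suc t) i \<le> e * (c t i + 1)" using e by (intro mult_left_mono) auto
        hence "e * c (Suc t) i \<le> e * 1 + e * c t i" by (simp add: algebra_simps)
        thus "exp (e * c (Suc t) i) \<le> exp (e * 1) * exp (e * c t i)" by (simp add: exp_add[symmetric])
      qed
      also have "\<dots> = exp (e * D (Suc t)) * Phi t e" unfolding Phi_def D_def e_def
        using False e_def by (simp add: sum_distrib_left)
      finally show ?thesis unfolding e_def .
    next
      case True
      define At where "At = A (Suc t)"
      have AtAr: "At \<subseteq> Ar" unfolding At_def Ar_def using Asub by simp
      have finAt: "finite At" using AtAr finAr finite_subset by blast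
      have neAt: "At \<noteq> {}" unfolding At_def using Ane by simp
      define W where "W = (\<Sum>j\<in>At. exp (e * c t j))"
      have W: "0 < W" unfolding W_def using finAt neAt by (intro sum_pos) auto
      have DB: "D (Suc t) = B (Suc t)" unfolding D_def using True e_def by simp
      have eB: "1 \<le> exp (e * B (Suc t))" using e B0 by simp
      have st: "(\<Sum>i\<in>At. exp (e * c t i) / W * exp (e * x (Suc t) i)) \<le> exp (e * B (Suc t))"
        using step[of "Suc t"] True tT unfolding e_def W_def At_def by simp
      have split: "Phi (Suc t) e = (\<Sum>i\<in>Ar - At. exp (e * c (Suc t) i)) + (\<Sum>i\<in>At. exp (e * c (Suc t) i))"
        unfolding Phi_def using sum.subset_diff[OF AtAr finAr] by simp
      have p1: "(\<Sum>i\<in>Ar - At. exp (e * c (Suc t) i)) = (\<Sum>i\<in>Ar - At. exp (e * c t i))"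
        using cS unfolding At_def by (intro sum.cong) auto
      have p2: "(\<Sum>i\<in>At. exp (e * c (Suc t) i)) = W * (\<Sum>i\<in>At. exp (e * c t i) / W * exp (e * x (Suc t) i))"
        unfolding sum_distrib_left using W cS unfolding At_def
        by (intro sum.cong) (auto simp: exp_add[symmetric] algebra_simps)
      have "Phi (Suc t) e \<le> exp (e * B (Suc t)) * (\<Sum>i\<in>Ar - At. exp (e * c t i)) + W * exp (e * B (Suc t))"
      proof -
        have "(\<Sum>i\<in>Ar - At. exp (e * c t i)) \<le> exp (e * B (Suc t)) * (\<Sum>i\<in>Ar - At. exp (e * c t i))"
        proof -
          have "0 \<le> (\<Sum>i\<in>Ar - At. exp (e * c t i))" by (intro sum_nonneg) auto
          thus ?thesis using eB mult_right_mono[OF eB] by simp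
        qed
        moreover have "W * (\<Sum>i\<in>At. exp (e * c t i) / W * exp (e * x (Suc t) i)) \<le> W * exp (e * B (Suc t))"
          using st W by (intro mult_left_mono) auto
        ultimately show ?thesis using split p1 p2 by linarith
      qed
      also have "\<dots> = exp (e * B (Suc t)) * Phi t e"
        unfolding Phi_def W_def using sum.subset_diff[OF AtAr finAr, of "\<lambda>i. exp (e * c t i)"]
        by (simp add: algebra_simps)
      finally show ?thesis unfolding e_def DB[symmetric] by simp
    qed
  qed
  define Psi where "Psi t e = ln (Phi t e) / e" for t e
  have stepA': "Psi (Suc t) (eta (Suc t)) \<le> D (Suc t) + Psi t (eta (Suc t))" if tT: "Suc t \<le> T" for t
  proof -
    have e: "0 < eta (Suc t)" using epos by simp
    have "ln (Phi (Suc t) (eta (Suc t))) \<le> ln (exp (eta (Suc t) * D (Suc t)) * Phi t (eta (Suc t)))"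
      using stepA[OF tT] Phipos by (subst ln_le_cancel_iff) (auto intro: mult_pos_pos)
    also have "\<dots> = eta (Suc t) * D (Suc t) + ln (Phi t (eta (Suc t)))" using Phipos[of t "eta (Suc t)"] by (simp add: ln_mult)
    finally have "ln (Phi (Suc t) (eta (Suc t))) / eta (Suc t) \<le> (eta (Suc t) * D (Suc t) + ln (Phi t (eta (Suc t)))) / eta (Suc t)"
      using e by (simp add: divide_right_mono)
    also have "\<dots> = D (Suc t) + ln (Phi t (eta (Suc t))) / eta (Suc t)" using e by (simp add: field_simps)
    finally show ?thesis unfolding Psi_def .
  qed
  have stepB: "Psi t e' \<le> Psi t e + ln K * (1 / e' - 1 / e)" if "0 < e'" "e' \<le> e" for t e e'
    unfolding Psi_def Phi_def using power_mean_exp[OF finAr neAr that, of "c t"] cardAr by simp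
  have R: "t < T \<Longrightarrow> Psi t (eta (Suc t)) \<le> ln K / eta (Suc t) + (\<Sum>s = 1..t. D s)" for t
  proof (induction t)
    case 0
    have "Phi 0 e = K" for e unfolding Phi_def c0 cardAr[symmetric] by simp
    thus ?case unfolding Psi_def by simp
  next
    case (Suc t)
    have e1: "0 < eta (Suc (Suc t))" using epos by simp
    have e12: "eta (Suc (Suc t)) \<le> eta (Suc t)" using emono by simp
    have "Psi (Suc t) (eta (Suc (Suc t))) \<le> Psi (Suc t) (eta (Suc t)) + ln K * (1 / eta (Suc (Suc t)) - 1 / eta (Suc t))"
      using stepB[OF e1 e12] .
    also have "\<dots> \<le> D (Suc t) + Psi t (eta (Suc t)) + ln K * (1 / eta (Suc (Suc t)) - 1 / eta (Suc t))"
      using stepA'[of t] Suc.prems by simp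
    also have "\<dots> \<le> D (Suc t) + ln K / eta (Suc t) + (\<Sum>s = 1..t. D s) + ln K * (1 / eta (Suc (Suc t)) - 1 / eta (Suc t))"
      using Suc.IH Suc.prems by simp
    also have "\<dots> = ln K / eta (Suc (Suc t)) + (\<Sum>s = 1..Suc t. D s)"
      by (simp add: algebra_simps)
    finally show ?case .
  qed
  obtain t where t: "T = Suc t" using T by (cases T) auto
  have eT: "0 < eta T" using epos T by simp
  have "exp (eta T * c T a) \<le> Phi T (eta T)" unfolding Phi_def
    using a finAr by (intro member_le_sum) (auto simp: Ar_def)
  hence "eta T * c T a \<le> ln (Phi T (eta T))" using Phipos by (metis ln_exp ln_le_cancel_iff exp_gt_zero)
  hence "c T a \<le> Psi T (eta T)" unfolding Psi_def using eT by (simp add: pos_le_divide_eq mult.commute)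
  also have "\<dots> \<le> D T + Psi t (eta T)" using stepA'[of t] t by simp
  also have "\<dots> \<le> D T + ln K / eta T + (\<Sum>s = 1..t. D s)" using R[of t] t by simp
  also have "\<dots> = ln K / eta T + (\<Sum>s = 1..T. D s)" using t by simp
  finally show ?thesis unfolding D_def .
qed

lemma act_take: "t - 1 \<le> n \<Longrightarrow> act Adv t (take n xs) = act Adv t xs"
  by (simp add: act_def min_absorb1)

lemma lossv_take: "t - 1 \<le> n \<Longrightarrow> lossv Loss t (take n xs) = lossv Loss t xs"
  by (rule ext) (simp add: lossv_def min_absorb1)

lemma sb_eta_take: "t - 1 \<le> n \<Longrightarrow> sb_eta K d Adv t (take n xs) = sb_eta K d Adv t xs"
  unfolding sb_eta_def by (rule arg_cong[where f = sqrt], rule arg_cong[where f = "\<lambda>x. _ / x"],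
     rule sum.cong) (auto simp: act_take)

lemma sb_gamma_take: "t - 1 \<le> n \<Longrightarrow> sb_gamma K d Adv t (take n xs) = sb_gamma K d Adv t xs"
  by (simp add: sb_gamma_def sb_eta_take)

lemma sb_qprob_take: "t - 1 \<le> n \<Longrightarrow> sb_qprob K d Adv cum t (take n xs) = sb_qprob K d Adv cum t xs"
  by (rule ext) (simp add: sb_qprob_def sb_eta_take act_take)

lemma sb_cum_take: "t \<le> n \<Longrightarrow> sb_cum K d Adv Loss (take n xs) t = sb_cum K d Adv Loss xs t"
proof (induction t)
  case 0 show ?case by simp
next
  case (Suc t)
  hence IH: "sb_cum K d Adv Loss (take n xs) t = sb_cum K d Adv Loss xs t" by simp
  have tn: "t < n" using Suc.prems by simp
  have h1: "act Adv (Suc t) (take n xs) = act Adv (Suc t) xs" using tn by (intro act_take) simp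
  have h2: "lossv Loss (Suc t) (take n xs) = lossv Loss (Suc t) xs" using tn by (intro lossv_take) simp
  have h3: "sb_gamma K d Adv (Suc t) (take n xs) = sb_gamma K d Adv (Suc t) xs" using tn by (intro sb_gamma_take) simp
  have h4: "sb_qprob K d Adv c (Suc t) (take n xs) = sb_qprob K d Adv c (Suc t) xs" for c
    using tn by (intro sb_qprob_take) simp
  have h5: "take n xs ! t = xs ! t" using tn by simp
  show ?case by (simp only: sb_cum.simps IH Let_def h1 h2 h3 h4 h5)
qed

lemma sb_q_take: "t - 1 \<le> n \<Longrightarrow> sb_q K d Adv Loss t (take n xs) = sb_q K d Adv Loss t xs"
  by (rule ext) (simp add: sb_q_def sb_cum_take sb_qprob_take)

lemma take_append_len: "length xs = t \<Longrightarrow> take t (xs @ ys) = xs" by simp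

locale sbx =
  fixes K :: nat and d :: real and Adv :: "nat \<Rightarrow> nat list \<Rightarrow> nat set"
    and Loss :: "nat \<Rightarrow> nat list \<Rightarrow> nat \<Rightarrow> real"
  assumes K: "1 \<le> K" and d0: "0 < d" and d1: "d < 1"
    and Adv: "\<And>t hs. Adv t hs \<noteq> {} \<and> Adv t hs \<subseteq> {1..K}"
    and Loss: "\<And>t hs i. 0 \<le> Loss t hs i \<and> Loss t hs i \<le> 1"
begin

lemma act_ne: "act Adv t xs \<noteq> {}" and act_sub: "act Adv t xs \<subseteq> {1..K}"
  and act_fin: "finite (act Adv t xs)"
  using Adv by (auto simp: act_def intro: finite_subset)

lemma lossv01: "0 \<le> lossv Loss t xs i" "lossv Loss t xs i \<le> 1"
  using Loss by (auto simp: lossv_def)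

lemma qprob_nonneg: "0 \<le> sb_qprob K d Adv cum t xs i"
  unfolding sb_qprob_def by (auto intro!: divide_nonneg_nonneg sum_nonneg)

lemma qprob_pos: "i \<in> act Adv t xs \<Longrightarrow> 0 < sb_qprob K d Adv cum t xs i"
  unfolding sb_qprob_def using act_fin act_ne by (auto intro!: divide_pos_pos sum_pos)

lemma qprob_out: "i \<notin> act Adv t xs \<Longrightarrow> sb_qprob K d Adv cum t xs i = 0"
  unfolding sb_qprob_def by simp

lemma qprob_sum: "(\<Sum>i\<in>act Adv t xs. sb_qprob K d Adv cum t xs i) = 1"
proof -
  have pos: "0 < (\<Sum>j\<in>act Adv t xs. exp (sb_eta K d Adv t xs * cum j))"
    using act_fin act_ne by (intro sum_pos) auto
  have "(\<Sum>i\<in>act Adv t xs. sb_qprob K d Adv cum t xs i)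
     = (\<Sum>i\<in>act Adv t xs. exp (sb_eta K d Adv t xs * cum i) / (\<Sum>j\<in>act Adv t xs. exp (sb_eta K d Adv t xs * cum j)))"
    unfolding sb_qprob_def by (intro sum.cong) auto
  also have "\<dots> = 1" using pos by (simp add: sum_divide_distrib[symmetric])
  finally show ?thesis .
qed

lemma q_nonneg: "0 \<le> sb_q K d Adv Loss t xs i"
  and q_pos: "i \<in> act Adv t xs \<Longrightarrow> 0 < sb_q K d Adv Loss t xs i"
  and q_out: "i \<notin> act Adv t xs \<Longrightarrow> sb_q K d Adv Loss t xs i = 0"
  and q_sum: "(\<Sum>i\<in>act Adv t xs. sb_q K d Adv Loss t xs i) = 1"
  unfolding sb_q_def using qprob_nonneg qprob_pos qprob_out qprob_sum by auto

lemma q_int: "(\<integral>\<^sup>+x. ennreal (sb_q K d Adv Loss t xs x) \<partial>count_space UNIV) = 1"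
proof -
  have "(\<integral>\<^sup>+x. ennreal (sb_q K d Adv Loss t xs x) \<partial>count_space UNIV)
      = (\<Sum>x\<in>act Adv t xs. ennreal (sb_q K d Adv Loss t xs x))"
    using act_fin q_out by (intro nn_integral_count_space') auto
  also have "\<dots> = ennreal (\<Sum>x\<in>act Adv t xs. sb_q K d Adv Loss t xs x)"
    using q_nonneg by simp
  finally show ?thesis using q_sum by simp
qed

lemma pmf_sb: "pmf (sb_pmf K d Adv Loss t xs) i = sb_q K d Adv Loss t xs i"
  unfolding sb_pmf_def using pmf_embed_pmf[OF q_nonneg q_int] .

lemma set_sb_pmf: "set_pmf (sb_pmf K d Adv Loss t xs) = act Adv t xs"
proof -
  have "set_pmf (sb_pmf K d Adv Loss t xs) = {x. sb_q K d Adv Loss t xs x \<noteq> 0}"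
    unfolding sb_pmf_def using set_embed_pmf[OF q_nonneg q_int] .
  also have "\<dots> = act Adv t xs"
  proof (intro set_eqI iffI)
    fix x assume "x \<in> {x. sb_q K d Adv Loss t xs x \<noteq> 0}"
    thus "x \<in> act Adv t xs" using q_out by blast
  next
    fix x assume "x \<in> act Adv t xs"
    thus "x \<in> {x. sb_q K d Adv Loss t xs x \<noteq> 0}" using q_pos[of x t xs] by simp
  qed
  finally show ?thesis .
qed

lemma hist_support:
  "xs \<in> set_pmf (sb_hist K d Adv Loss T) \<Longrightarrow> length xs = T \<and> (\<forall>t<T. xs ! t \<in> act Adv (Suc t) xs)"
proof (induction T arbitrary: xs)
  case 0 thus ?case by simp
next
  case (Suc T)
  from Suc.prems obtain ys i where ys: "ys \<in> set_pmf (sb_hist K d Adv Loss T)"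
    and i: "i \<in> act Adv (Suc T) ys" and xs: "xs = ys @ [i]"
    by (auto simp: set_sb_pmf)
  from Suc.IH[OF ys] have len: "length ys = T" and pre: "\<forall>t<T. ys ! t \<in> act Adv (Suc t) ys" by auto
  have actx: "act Adv (Suc t) xs = act Adv (Suc t) ys" if "t \<le> T" for t
  proof -
    have "act Adv (Suc t) (take T xs) = act Adv (Suc t) xs" using that by (intro act_take) simp
    thus ?thesis using xs len by simp
  qed
  show ?case
  proof (intro conjI allI impI)
    show "length xs = Suc T" using xs len by simp
    fix t assume t: "t < Suc T"
    show "xs ! t \<in> act Adv (Suc t) xs"
    proof (cases "t < T")
      case True thus ?thesis using pre actx[of t] xs len by (simp add: nth_append)
    next
      case False hence "t = T" using t by simp
      thus ?thesis using i actx[of T] xs len by (simp add: nth_append)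
    qed
  qed
qed

lemma supermart:
  fixes Z :: "nat \<Rightarrow> nat list \<Rightarrow> real"
  assumes Z0: "Z 0 [] \<le> 1" and Znn: "\<And>t xs. 0 \<le> Z t xs"
    and step: "\<And>t xs. xs \<in> set_pmf (sb_hist K d Adv Loss t) \<Longrightarrow>
      (\<Sum>i\<in>act Adv (Suc t) xs. sb_q K d Adv Loss (Suc t) xs i * Z (Suc t) (xs @ [i])) \<le> Z t xs"
  shows "(\<integral>\<^sup>+xs. ennreal (Z T xs) \<partial>measure_pmf (sb_hist K d Adv Loss T)) \<le> 1"
proof (induction T)
  case 0 thus ?case using Z0 by simp
next
  case (Suc T)
  have inner: "(\<integral>\<^sup>+i. ennreal (Z (Suc T) (xs @ [i])) \<partial>measure_pmf (sb_pmf K d Adv Loss (Suc T) xs))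
      \<le> ennreal (Z T xs)" if xs: "xs \<in> set_pmf (sb_hist K d Adv Loss T)" for xs
  proof -
    have "(\<integral>\<^sup>+i. ennreal (Z (Suc T) (xs @ [i])) \<partial>measure_pmf (sb_pmf K d Adv Loss (Suc T) xs))
        = (\<Sum>i\<in>act Adv (Suc T) xs. ennreal (Z (Suc T) (xs @ [i])) * pmf (sb_pmf K d Adv Loss (Suc T) xs) i)"
      using act_fin by (intro nn_integral_measure_pmf_support) (auto simp: set_sb_pmf)
    also have "\<dots> = (\<Sum>i\<in>act Adv (Suc T) xs. ennreal (sb_q K d Adv Loss (Suc T) xs i * Z (Suc T) (xs @ [i])))"
      using q_nonneg Znn by (intro sum.cong) (auto simp: pmf_sb ennreal_mult mult.commute)
    also have "\<dots> = ennreal (\<Sum>i\<in>act Adv (Suc T) xs. sb_q K d Adv Loss (Suc T) xs i * Z (Suc T) (xs @ [i]))"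
      using q_nonneg Znn by (intro sum_ennreal) simp
    also have "\<dots> \<le> ennreal (Z T xs)" using step[OF xs] by (rule ennreal_leI)
    finally show ?thesis .
  qed
  have "(\<integral>\<^sup>+xs. ennreal (Z (Suc T) xs) \<partial>measure_pmf (sb_hist K d Adv Loss (Suc T)))
      = (\<integral>\<^sup>+xs. (\<integral>\<^sup>+i. ennreal (Z (Suc T) (xs @ [i])) \<partial>measure_pmf (sb_pmf K d Adv Loss (Suc T) xs))
           \<partial>measure_pmf (sb_hist K d Adv Loss T))"
    by simp
  also have "\<dots> \<le> (\<integral>\<^sup>+xs. ennreal (Z T xs) \<partial>measure_pmf (sb_hist K d Adv Loss T))"
    using inner by (intro nn_integral_mono_AE) (simp add: AE_measure_pmf_iff)
  also have "\<dots> \<le> 1" using Suc.IH .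
  finally show ?case .
qed

end

lemma pmf_markov:
  fixes Z :: "'a \<Rightarrow> real" and M :: "'a pmf"
  assumes Znn: "\<And>x. 0 \<le> Z x" and int: "(\<integral>\<^sup>+x. ennreal (Z x) \<partial>measure_pmf M) \<le> 1" and c: "0 < c"
  shows "measure_pmf.prob M {x. c \<le> Z x} \<le> 1 / c"
proof -
  have "emeasure (measure_pmf M) {x\<in>space (measure_pmf M). 1 \<le> ennreal (1 / c) * ennreal (Z x)}
      \<le> ennreal (1 / c) * (\<integral>\<^sup>+x. ennreal (Z x) * indicator (space (measure_pmf M)) x \<partial>measure_pmf M)"
    by (intro nn_integral_Markov_inequality) auto
  also have "(\<integral>\<^sup>+x. ennreal (Z x) * indicator (space (measure_pmf M)) x \<partial>measure_pmf M)
      = (\<integral>\<^sup>+x. ennreal (Z x) \<partial>measure_pmf M)" by simp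
  also have "ennreal (1 / c) * \<dots> \<le> ennreal (1 / c) * 1" using int by (intro mult_left_mono) auto
  also have "{x\<in>space (measure_pmf M). 1 \<le> ennreal (1 / c) * ennreal (Z x)} = {x. c \<le> Z x}"
  proof -
    have "1 \<le> ennreal (1 / c) * ennreal (Z x) \<longleftrightarrow> c \<le> Z x" for x
    proof -
      have "ennreal (1 / c) * ennreal (Z x) = ennreal (Z x / c)"
        using c Znn[of x] by (simp add: ennreal_mult[symmetric])
      thus ?thesis using c by (simp add: le_divide_eq)
    qed
    thus ?thesis by auto
  qed
  finally have "emeasure (measure_pmf M) {x. c \<le> Z x} \<le> ennreal (1 / c)" by simp
  thus ?thesis using c by (simp add: measure_pmf.emeasure_eq_measure)
qed

context sbx begin

definition ht :: "nat \<Rightarrow> nat list \<Rightarrow> nat \<Rightarrow> real" where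
  "ht s xs j = lossv Loss s xs j * (if xs ! (s - 1) = j then 1 else 0)
      / (sb_q K d Adv Loss s xs j + sb_gamma K d Adv s xs)"

definition dev :: "(nat \<Rightarrow> nat list \<Rightarrow> nat \<Rightarrow> real) \<Rightarrow> nat \<Rightarrow> nat list \<Rightarrow> real" where
  "dev w s xs = (\<Sum>j\<in>act Adv s xs. w s xs j * (ht s xs j - lossv Loss s xs j))"

definition Zw :: "(nat \<Rightarrow> nat list \<Rightarrow> nat \<Rightarrow> real) \<Rightarrow> nat \<Rightarrow> nat list \<Rightarrow> real" where
  "Zw w t xs = exp (\<Sum>s = 1..t. dev w s xs)"

lemma ht_take: "1 \<le> s \<Longrightarrow> s \<le> n \<Longrightarrow> ht s (take n xs) = ht s xs"
proof (rule ext)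
  fix j assume s: "1 \<le> s" "s \<le> n"
  have a: "lossv Loss s (take n xs) = lossv Loss s xs" using s by (intro lossv_take) simp
  have b: "sb_q K d Adv Loss s (take n xs) = sb_q K d Adv Loss s xs" using s by (intro sb_q_take) simp
  have c: "sb_gamma K d Adv s (take n xs) = sb_gamma K d Adv s xs" using s by (intro sb_gamma_take) simp
  have e: "take n xs ! (s - 1) = xs ! (s - 1)" using s by simp
  show "ht s (take n xs) j = ht s xs j" by (simp only: ht_def a b c e)
qed

lemma dev_take:
  fixes w :: "nat \<Rightarrow> nat list \<Rightarrow> nat \<Rightarrow> real" and s n :: nat and xs :: "nat list"
  assumes wpre: "\<And>s xs n. s - 1 \<le> n \<Longrightarrow> w s (take n xs) = w s xs"
    and s: "1 \<le> s" "s \<le> n"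
  shows "dev w s (take n xs) = dev w s xs"
proof -
  have a: "lossv Loss s (take n xs) = lossv Loss s xs" using s by (intro lossv_take) simp
  have b: "act Adv s (take n xs) = act Adv s xs" using s by (intro act_take) simp
  have c: "w s (take n xs) = w s xs" using s by (intro wpre) simp
  show ?thesis by (simp only: dev_def a b c ht_take[OF s])
qed

lemma gamma_pos: "1 \<le> s \<Longrightarrow> 0 < sb_gamma K d Adv s xs"
proof -
  assume s: "1 \<le> s"
  have L: "0 < ln (3 * real K / d)" using K d0 d1 by (simp add: ln_gt_zero_iff)
  have "0 < real (card (act Adv s xs))" using act_fin act_ne by (simp add: card_gt_0_iff)
  hence "0 < (\<Sum>r = 1..s. real (card (act Adv r xs)))"
    using s by (intro sum_pos2[where i = s]) auto
  thus ?thesis using L unfolding sb_gamma_def sb_eta_def by simp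
qed

lemma ix_super:
  fixes w :: "nat \<Rightarrow> nat list \<Rightarrow> nat \<Rightarrow> real"
  assumes wpre: "\<And>s xs n. s - 1 \<le> n \<Longrightarrow> w s (take n xs) = w s xs"
    and wb: "\<And>s xs j. 0 \<le> w s xs j \<and> w s xs j \<le> sb_gamma K d Adv s xs"
  shows "(\<integral>\<^sup>+xs. ennreal (Zw w T xs) \<partial>measure_pmf (sb_hist K d Adv Loss T)) \<le> 1"
proof (rule supermart)
  show "Zw w 0 [] \<le> 1" unfolding Zw_def by simp
  show "0 \<le> Zw w t xs" for t xs unfolding Zw_def by simp
  fix t xs assume xs: "xs \<in> set_pmf (sb_hist K d Adv Loss t)"
  have len: "length xs = t" using hist_support[OF xs] by simp
  define A where "A = act Adv (Suc t) xs"
  define q where "q = sb_q K d Adv Loss (Suc t) xs"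
  define g where "g = sb_gamma K d Adv (Suc t) xs"
  define l where "l = lossv Loss (Suc t) xs"
  define ww where "ww = w (Suc t) xs"
  have red: "Zw w (Suc t) (xs @ [i]) = Zw w t xs *
      exp (\<Sum>j\<in>A. ww j * (l j * (if i = j then 1 else 0) / (q j + g) - l j))" for i
  proof -
    let ?ys = "xs @ [i]"
    have tk: "take t ?ys = xs" using len by simp
    have p1: "dev w s ?ys = dev w s xs" if "s \<in> {1..t}" for s
      using dev_take[of w s t ?ys, OF wpre] that tk by simp
    have a: "act Adv (Suc t) ?ys = A" unfolding A_def using act_take[of "Suc t" t Adv ?ys] tk by simp
    have b: "lossv Loss (Suc t) ?ys = l" unfolding l_def using lossv_take[of "Suc t" t Loss ?ys] tk by simp
    have c: "sb_q K d Adv Loss (Suc t) ?ys = q" unfolding q_def using sb_q_take[of "Suc t" t K d Adv Loss ?ys] tk by simp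
    have e: "sb_gamma K d Adv (Suc t) ?ys = g" unfolding g_def using sb_gamma_take[of "Suc t" t K d Adv ?ys] tk by simp
    have f: "w (Suc t) ?ys = ww" unfolding ww_def using wpre[of "Suc t" t ?ys] tk by simp
    have n: "?ys ! (Suc t - 1) = i" using len by (simp add: nth_append)
    have p2: "dev w (Suc t) ?ys = (\<Sum>j\<in>A. ww j * (l j * (if i = j then 1 else 0) / (q j + g) - l j))"
      by (simp only: dev_def ht_def a b c e f n)
    have "(\<Sum>s = 1..Suc t. dev w s ?ys) = (\<Sum>s = 1..t. dev w s xs) + dev w (Suc t) ?ys"
      using p1 by simp
    thus ?thesis unfolding Zw_def p2 by (simp add: exp_add)
  qed
  have "(\<Sum>i\<in>A. q i * Zw w (Suc t) (xs @ [i]))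
     = Zw w t xs * (\<Sum>i\<in>A. q i * exp (\<Sum>j\<in>A. ww j * (l j * (if i = j then 1 else 0) / (q j + g) - l j)))"
    unfolding red by (simp add: sum_distrib_left mult_ac)
  also have "\<dots> \<le> Zw w t xs * 1"
  proof (rule mult_left_mono)
    show "0 \<le> Zw w t xs" unfolding Zw_def by simp
    show "(\<Sum>i\<in>A. q i * exp (\<Sum>j\<in>A. ww j * (l j * (if i = j then 1 else 0) / (q j + g) - l j))) \<le> 1"
      unfolding A_def q_def g_def l_def ww_def
      using act_fin q_pos q_sum gamma_pos wb lossv01 by (intro ix_round) auto
  qed
  finally show "(\<Sum>i\<in>act Adv (Suc t) xs. sb_q K d Adv Loss (Suc t) xs i * Zw w (Suc t) (xs @ [i])) \<le> Zw w t xs"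
    unfolding A_def q_def by simp
qed

end

lemma sum_over_sqrt:
  fixes a :: "nat \<Rightarrow> real"
  assumes apos: "\<And>s. 1 \<le> s \<Longrightarrow> 0 < a s"
  shows "(\<Sum>s = 1..T. a s / sqrt (\<Sum>r = 1..s. a r)) \<le> 2 * sqrt (\<Sum>r = 1..T. a r)"
proof (induction T)
  case 0 show ?case by simp
next
  case (Suc T)
  define S where "S = (\<Sum>r = 1..T. a r)"
  define S' where "S' = (\<Sum>r = 1..Suc T. a r)"
  have S0: "0 \<le> S" unfolding S_def
  proof (intro sum_nonneg)
    fix x assume "x \<in> {1..T}" thus "0 \<le> a x" using apos[of x] by simp
  qed
  have S'eq: "S' = S + a (Suc T)" unfolding S'_def S_def by simp
  have aS: "0 < a (Suc T)" using apos by simp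
  have S'pos: "0 < S'" using S0 aS S'eq by simp
  have key: "a (Suc T) / sqrt S' \<le> 2 * sqrt S' - 2 * sqrt S"
  proof -
    have sq: "sqrt S * sqrt S' \<le> (S + S') / 2"
    proof -
      have "0 \<le> (sqrt S - sqrt S')^2" by simp
      hence "0 \<le> S - 2 * (sqrt S * sqrt S') + S'" using S0 S'pos
        by (simp add: power2_eq_square algebra_simps)
      thus ?thesis by simp
    qed
    have "a (Suc T) = S' - S" using S'eq by simp
    also have "\<dots> \<le> (2 * sqrt S' - 2 * sqrt S) * sqrt S'"
    proof -
      have e: "sqrt S' * sqrt S' = S'" using S'pos by simp
      have r: "(2 * sqrt S' - 2 * sqrt S) * sqrt S' = 2 * S' - 2 * (sqrt S * sqrt S')"
        using e by (simp add: algebra_simps)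
      have l: "S' - S \<le> 2 * S' - 2 * (sqrt S * sqrt S')" using sq by (simp add: field_simps)
      show ?thesis unfolding r using l .
    qed
    finally have "a (Suc T) \<le> (2 * sqrt S' - 2 * sqrt S) * sqrt S'" .
    thus ?thesis using S'pos by (simp add: divide_le_eq)
  qed
  have "(\<Sum>s = 1..Suc T. a s / sqrt (\<Sum>r = 1..s. a r)) = (\<Sum>s = 1..T. a s / sqrt (\<Sum>r = 1..s. a r)) + a (Suc T) / sqrt S'"
    unfolding S'_def by simp
  also have "\<dots> \<le> 2 * sqrt S + (2 * sqrt S' - 2 * sqrt S)" using Suc.IH key unfolding S_def by linarith
  finally show ?case unfolding S'_def by simp
qed

context sbx begin

definition LL :: real where "LL = ln (3 * real K / d)"
definition SS :: "nat \<Rightarrow> nat list \<Rightarrow> real" where "SS t xs = (\<Sum>r = 1..t. real (card (act Adv r xs)))"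
definition HH :: "nat \<Rightarrow> nat list \<Rightarrow> real" where "HH s xs = (\<Sum>j\<in>act Adv s xs. ht s xs j)"
definition w0 :: "nat \<Rightarrow> nat list \<Rightarrow> nat \<Rightarrow> real" where "w0 s xs j = sb_gamma K d Adv s xs"
definition wa :: "nat \<Rightarrow> nat \<Rightarrow> nat \<Rightarrow> nat \<Rightarrow> nat list \<Rightarrow> nat \<Rightarrow> real" where
  "wa T a m s xs j = (if j = a then min (sqrt (LL / (real m * real T)) / 2) (sb_gamma K d Adv s xs) else 0)"

lemma LL_pos: "0 < LL" unfolding LL_def using K d0 d1 by (simp add: ln_gt_zero_iff)

lemma card_act: "1 \<le> real (card (act Adv t xs))"
  using act_fin act_ne by (simp add: Suc_le_eq card_gt_0_iff)

lemma SS_ge: "real t \<le> SS t xs"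
proof -
  have "(\<Sum>r = 1..t. (1::real)) \<le> SS t xs" unfolding SS_def using card_act by (intro sum_mono) auto
  thus ?thesis by simp
qed

lemma SS_pos: "1 \<le> t \<Longrightarrow> 0 < SS t xs" using SS_ge[of t xs] by simp

lemma eta_eq: "sb_eta K d Adv t xs = sqrt (LL / SS t xs)" unfolding sb_eta_def LL_def SS_def ..

lemma gamma_eq: "sb_gamma K d Adv t xs = sqrt (LL / SS t xs) / 2" unfolding sb_gamma_def eta_eq ..

lemma eta_pos: "1 \<le> t \<Longrightarrow> 0 < sb_eta K d Adv t xs"
  unfolding eta_eq using SS_pos LL_pos by simp

lemma eta_mono: "1 \<le> s \<Longrightarrow> s \<le> t \<Longrightarrow> sb_eta K d Adv t xs \<le> sb_eta K d Adv s xs"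
proof -
  assume s: "1 \<le> s" "s \<le> t"
  have "SS s xs \<le> SS t xs" unfolding SS_def using s
    by (intro sum_mono2) auto
  hence "LL / SS t xs \<le> LL / SS s xs" using SS_pos[OF s(1), of xs] LL_pos
    by (intro divide_left_mono) auto
  thus ?thesis unfolding eta_eq by simp
qed

lemma gamma_nonneg: "0 \<le> sb_gamma K d Adv t xs"
  unfolding gamma_eq using LL_pos SS_ge[of t xs] by simp

lemma ht_nonneg: "0 \<le> ht s xs j"
  unfolding ht_def using lossv01 q_nonneg gamma_nonneg by (auto intro!: divide_nonneg_nonneg)

lemma HH_nonneg: "0 \<le> HH s xs" unfolding HH_def using ht_nonneg by (intro sum_nonneg) auto

lemma cum_step: "sb_cum K d Adv Loss xs (Suc t) i = sb_cum K d Adv Loss xs t i +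
   (if i \<in> act Adv (Suc t) xs then lossv Loss (Suc t) xs (xs ! (Suc t - 1)) - ht (Suc t) xs i
       - sb_gamma K d Adv (Suc t) xs * HH (Suc t) xs else 0)"
  by (simp add: Let_def ht_def HH_def sb_q_def)

lemma cum_eq: "sb_cum K d Adv Loss xs t a = (\<Sum>s = 1..t. (if a \<in> act Adv s xs then
    lossv Loss s xs (xs ! (s - 1)) - ht s xs a - sb_gamma K d Adv s xs * HH s xs else 0))"
  by (induction t) (simp_all add: cum_step del: sb_cum.simps(2))

end

context sbx begin

lemma potential_app:
  assumes xs: "xs \<in> set_pmf (sb_hist K d Adv Loss T)" and T: "1 \<le> T" and a: "a \<in> {1..K}"
  shows "sb_cum K d Adv Loss xs T a \<le> ln K / sb_eta K d Adv T xs +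
     (\<Sum>t = 1..T. if sb_eta K d Adv t xs \<le> 1 then sb_eta K d Adv t xs * (1 + HH t xs) else 1)"
proof (rule potential_bound[where A="\<lambda>t. act Adv t xs" and eta="\<lambda>t. sb_eta K d Adv t xs"
      and c="\<lambda>t. sb_cum K d Adv Loss xs t"
      and x="\<lambda>t i. lossv Loss t xs (xs ! (t - 1)) - ht t xs i - sb_gamma K d Adv t xs * HH t xs"
      and B="\<lambda>t. sb_eta K d Adv t xs * (1 + HH t xs)"])
  show "1 \<le> K" using K .
  show "act Adv t xs \<subseteq> {1..K}" for t using act_sub .
  show "act Adv t xs \<noteq> {}" for t using act_ne .
  show "0 < sb_eta K d Adv t xs" if "1 \<le> t" for t using eta_pos that .
  show "sb_eta K d Adv (Suc t) xs \<le> sb_eta K d Adv t xs" if "1 \<le> t" for t using eta_mono that by simp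
  show "sb_cum K d Adv Loss xs 0 i = 0" for i by simp
  show "sb_cum K d Adv Loss xs (Suc t) i = sb_cum K d Adv Loss xs t i +
     (if i \<in> act Adv (Suc t) xs then lossv Loss (Suc t) xs (xs ! (Suc t - 1)) - ht (Suc t) xs i
       - sb_gamma K d Adv (Suc t) xs * HH (Suc t) xs else 0)" for t i
    by (rule cum_step)
  show "lossv Loss t xs (xs ! (t - 1)) - ht t xs i - sb_gamma K d Adv t xs * HH t xs \<le> 1" for t i
  proof -
    have "0 \<le> sb_gamma K d Adv t xs * HH t xs" using gamma_nonneg HH_nonneg by simp
    thus ?thesis using lossv01 ht_nonneg[of t xs i] by (smt (verit))
  qed
  show "0 \<le> sb_eta K d Adv t xs * (1 + HH t xs)" for t
    using HH_nonneg[of t xs] eta_eq LL_pos SS_ge[of t xs] by simp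
  show "a \<in> {1..K}" using a .
  show "1 \<le> T" using T .
  fix t assume t1: "1 \<le> t" and tT: "t \<le> T" and e1: "sb_eta K d Adv t xs \<le> 1"
  define k where "k = xs ! (t - 1)"
  have k: "k \<in> act Adv t xs" using hist_support[OF xs] t1 tT unfolding k_def
    by (metis One_nat_def Suc_pred diff_less le_less_trans less_numeral_extra(1) order_less_le_trans)
  define A where "A = act Adv t xs"
  define q where "q = sb_q K d Adv Loss t xs"
  define g where "g = sb_gamma K d Adv t xs"
  define e where "e = sb_eta K d Adv t xs"
  define l where "l = lossv Loss t xs k"
  have qeq: "exp (e * sb_cum K d Adv Loss xs (t - 1) i) / (\<Sum>j\<in>A. exp (e * sb_cum K d Adv Loss xs (t - 1) j)) = q i"
    if "i \<in> A" for i
    using that unfolding q_def sb_q_def sb_qprob_def A_def e_def by simp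
  have hteq: "ht t xs i = (if i = k then l / (q k + g) else 0)" for i
    unfolding ht_def q_def g_def l_def k_def by auto
  have HHeq: "HH t xs = l / (q k + g)"
  proof -
    have "HH t xs = (\<Sum>i\<in>A. if i = k then l / (q k + g) else 0)" unfolding HH_def A_def hteq ..
    also have "\<dots> = l / (q k + g)" using k act_fin unfolding A_def by simp
    finally show ?thesis .
  qed
  have "(\<Sum>i\<in>A. exp (e * sb_cum K d Adv Loss xs (t - 1) i) / (\<Sum>j\<in>A. exp (e * sb_cum K d Adv Loss xs (t - 1) j))
          * exp (e * (lossv Loss t xs (xs ! (t - 1)) - ht t xs i - g * HH t xs)))
      = (\<Sum>i\<in>A. q i * exp (e * (l - (if i = k then l / (q k + g) else 0) - g * (l / (q k + g)))))"
    using qeq by (intro sum.cong) (auto simp: hteq HHeq l_def k_def)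
  also have "\<dots> \<le> exp (e * (e * (1 + l / (q k + g))))"
  proof (rule pot_round)
    show "finite A" unfolding A_def using act_fin .
    show "k \<in> A" unfolding A_def using k .
    show "0 \<le> q i" for i unfolding q_def using q_nonneg .
    show "sum q A = 1" unfolding q_def A_def using q_sum .
    show "0 < g" unfolding g_def using gamma_pos t1 .
    show "0 \<le> l" "l \<le> 1" unfolding l_def using lossv01 by auto
    show "0 < e" unfolding e_def using eta_pos t1 .
    show "e \<le> 1" unfolding e_def using e1 .
  qed
  finally show "(\<Sum>i\<in>act Adv t xs. exp (sb_eta K d Adv t xs * sb_cum K d Adv Loss xs (t - 1) i) /
        (\<Sum>j\<in>act Adv t xs. exp (sb_eta K d Adv t xs * sb_cum K d Adv Loss xs (t - 1) j)) *
        exp (sb_eta K d Adv t xs * (lossv Loss t xs (xs ! (t - 1)) - ht t xs i - sb_gamma K d Adv t xs * HH t xs)))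
      \<le> exp (sb_eta K d Adv t xs * (sb_eta K d Adv t xs * (1 + HH t xs)))"
    unfolding A_def e_def g_def HHeq .
qed

end

context sbx begin

lemma dev_w0: "dev w0 s xs = sb_gamma K d Adv s xs * HH s xs
    - sb_gamma K d Adv s xs * (\<Sum>j\<in>act Adv s xs. lossv Loss s xs j)"
  unfolding dev_def w0_def HH_def by (simp add: sum_distrib_left right_diff_distrib sum_subtractf)

lemma dev_wa: "dev (wa T a m) s xs = (if a \<in> act Adv s xs then
    min (sqrt (LL / (real m * real T)) / 2) (sb_gamma K d Adv s xs) * (ht s xs a - lossv Loss s xs a) else 0)"
proof -
  have "dev (wa T a m) s xs = (\<Sum>j\<in>act Adv s xs. if j = a then
     min (sqrt (LL / (real m * real T)) / 2) (sb_gamma K d Adv s xs) * (ht s xs a - lossv Loss s xs a) else 0)"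
    unfolding dev_def wa_def by (intro sum.cong) auto
  also have "\<dots> = (if a \<in> act Adv s xs then min (sqrt (LL / (real m * real T)) / 2) (sb_gamma K d Adv s xs) * (ht s xs a - lossv Loss s xs a) else 0)"
    using act_fin by (simp add: sum.delta')
  finally show ?thesis .
qed

lemma act_card_le: "real (card (act Adv t xs)) \<le> real K"
  using card_mono[OF _ act_sub[of t xs]] by simp

lemma det_bound:
  assumes xs: "xs \<in> set_pmf (sb_hist K d Adv Loss T)" and T: "1 \<le> T" and a: "a \<in> {1..K}"
    and E0: "(\<Sum>s = 1..T. dev w0 s xs) \<le> Lam"
    and Ea: "\<And>m. m \<in> {1..K} \<Longrightarrow> (\<Sum>s = 1..T. dev (wa T a m) s xs) \<le> Lam"
    and Lam0: "0 \<le> Lam" and Lam1: "Lam \<le> 2 * LL"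
  shows "regret Adv Loss T xs a \<le> 20 * sqrt (LL * SS T xs)"
proof -
  define S where "S = SS T xs"
  define Sq where "Sq = sqrt (LL * S)"
  have ST: "real T \<le> S" unfolding S_def by (rule SS_ge)
  have Spos: "0 < S" using ST T by simp
  have Sq0: "0 \<le> Sq" unfolding Sq_def using LL_pos Spos by simp
  define r where "r s = (if a \<in> act Adv s xs then lossv Loss s xs (xs ! (s - 1)) - lossv Loss s xs a else 0)" for s
  have reg: "regret Adv Loss T xs a = (\<Sum>s = 1..T. r s)" unfolding regret_def r_def ..
  show ?thesis
  proof (cases "S \<le> LL")
    case True
    have "(\<Sum>s = 1..T. r s) \<le> (\<Sum>s = 1..T. (1::real))"
      unfolding r_def using lossv01 by (intro sum_mono) (auto simp: diff_le_eq intro: add_increasing2)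
    also have "\<dots> = real T" by simp
    also have "\<dots> \<le> S" by (rule ST)
    also have "S = sqrt (S * S)" using Spos by simp
    also have "\<dots> \<le> Sq" unfolding Sq_def using True Spos by (intro real_sqrt_le_mono mult_right_mono) auto
    finally show ?thesis unfolding reg S_def[symmetric] Sq_def[symmetric] using Sq0 by linarith
  next
    case False
    hence LLS: "LL < S" by simp
    define e where "e s = sb_eta K d Adv s xs" for s
    define g where "g s = sb_gamma K d Adv s xs" for s
    define H where "H s = HH s xs" for s
    define n where "n s = real (card (act Adv s xs))" for s
    have ge: "e s = 2 * g s" for s unfolding e_def g_def sb_gamma_def by simp
    have e0: "0 \<le> e s" for s using gamma_nonneg[of s xs] ge unfolding g_def by simp
    have g0: "0 \<le> g s" for s using gamma_nonneg unfolding g_def by simp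
    have H0: "0 \<le> H s" for s using HH_nonneg unfolding H_def by simp
    have n1: "1 \<le> n s" for s using card_act unfolding n_def by simp
    define X where "X = (\<Sum>s = 1..T. if a \<in> act Adv s xs then ht s xs a - lossv Loss s xs a else 0)"
    define Y where "Y = (\<Sum>s = 1..T. if a \<in> act Adv s xs then g s * H s else 0)"
    define C where "C = sb_cum K d Adv Loss xs T a"
    have decomp: "(\<Sum>s = 1..T. r s) = C + X + Y"
    proof -
      have "r s = (if a \<in> act Adv s xs then
          lossv Loss s xs (xs ! (s - 1)) - ht s xs a - sb_gamma K d Adv s xs * HH s xs else 0)
          + (if a \<in> act Adv s xs then ht s xs a - lossv Loss s xs a else 0)
          + (if a \<in> act Adv s xs then g s * H s else 0)" for s
        unfolding r_def g_def H_def by auto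
      hence "(\<Sum>s = 1..T. r s) = (\<Sum>s = 1..T. (if a \<in> act Adv s xs then
          lossv Loss s xs (xs ! (s - 1)) - ht s xs a - sb_gamma K d Adv s xs * HH s xs else 0))
          + X + Y" unfolding X_def Y_def by (simp add: sum.distrib)
      thus ?thesis unfolding C_def cum_eq .
    qed
    have pot: "C \<le> ln K / e T + (\<Sum>s = 1..T. if e s \<le> 1 then e s * (1 + H s) else 1)"
      unfolding C_def e_def H_def using potential_app[OF xs T a] .
    have Dle: "(\<Sum>s = 1..T. if e s \<le> 1 then e s * (1 + H s) else 1) \<le> (\<Sum>s = 1..T. 2 * e s + 2 * (g s * H s))"
    proof (intro sum_mono)
      fix s
      have "0 \<le> e s * H s" using e0 H0 by simp
      moreover have "e s * H s = 2 * (g s * H s)" using ge by simp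
      ultimately show "(if e s \<le> 1 then e s * (1 + H s) else 1) \<le> 2 * e s + 2 * (g s * H s)"
        using e0[of s] by (auto simp: algebra_simps)
    qed
    have sen: "(\<Sum>s = 1..T. e s * n s) \<le> 2 * Sq"
    proof -
      have "e s * n s = sqrt LL * (n s / sqrt (\<Sum>r = 1..s. n r))" for s
        unfolding e_def eta_eq SS_def n_def by (simp add: real_sqrt_divide)
      hence "(\<Sum>s = 1..T. e s * n s) = sqrt LL * (\<Sum>s = 1..T. n s / sqrt (\<Sum>r = 1..s. n r))"
        by (simp add: sum_distrib_left)
      also have "\<dots> \<le> sqrt LL * (2 * sqrt (\<Sum>r = 1..T. n r))"
        using sum_over_sqrt[of n T] n1 LL_pos
        by (intro mult_left_mono) (auto intro: less_le_trans[OF zero_less_one])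
      also have "(\<Sum>r = 1..T. n r) = S" unfolding S_def SS_def n_def ..
      also have "sqrt LL * (2 * sqrt S) = 2 * Sq" unfolding Sq_def by (simp add: real_sqrt_mult)
      finally show ?thesis .
    qed
    have se: "(\<Sum>s = 1..T. e s) \<le> 2 * Sq"
    proof -
      have "(\<Sum>s = 1..T. e s) \<le> (\<Sum>s = 1..T. e s * n s)"
      proof (intro sum_mono)
        fix s show "e s \<le> e s * n s" using mult_left_mono[OF n1 e0, of s] by simp
      qed
      thus ?thesis using sen by linarith
    qed
    have sgn: "(\<Sum>s = 1..T. 2 * (g s * n s)) \<le> 2 * Sq"
    proof -
      have "(\<Sum>s = 1..T. 2 * (g s * n s)) = (\<Sum>s = 1..T. e s * n s)" using ge by (intro sum.cong) auto
      thus ?thesis using sen by simp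
    qed
    have sgH: "(\<Sum>s = 1..T. g s * H s) \<le> Lam + Sq"
    proof -
      have "g s * H s \<le> dev w0 s xs + g s * n s" for s
      proof -
        have "(\<Sum>j\<in>act Adv s xs. lossv Loss s xs j) \<le> (\<Sum>j\<in>act Adv s xs. (1::real))"
          using lossv01 by (intro sum_mono) auto
        hence "(\<Sum>j\<in>act Adv s xs. lossv Loss s xs j) \<le> n s" unfolding n_def by simp
        hence "g s * (\<Sum>j\<in>act Adv s xs. lossv Loss s xs j) \<le> g s * n s" using g0[of s] by (rule mult_left_mono)
        thus ?thesis using dev_w0[of s xs] unfolding g_def H_def by linarith
      qed
      hence "(\<Sum>s = 1..T. g s * H s) \<le> (\<Sum>s = 1..T. dev w0 s xs + g s * n s)" by (intro sum_mono)
      also have "\<dots> = (\<Sum>s = 1..T. dev w0 s xs) + (\<Sum>s = 1..T. g s * n s)" by (simp add: sum.distrib)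
      finally show ?thesis using E0 sgn by (simp add: sum_distrib_left[symmetric])
    qed
    have YgH: "Y \<le> (\<Sum>s = 1..T. g s * H s)" unfolding Y_def
      using g0 H0 by (intro sum_mono) auto
    define m where "m = nat \<lceil>S / real T\<rceil>"
    have Tpos: "0 < real T" using T by simp
    have SKT: "S \<le> real K * real T"
    proof -
      have "S \<le> (\<Sum>s = 1..T. real K)" unfolding S_def SS_def using act_card_le by (intro sum_mono) auto
      thus ?thesis by (simp add: mult.commute)
    qed
    have x0: "0 \<le> S / real T" using Spos Tpos by simp
    have mc: "real m = real_of_int \<lceil>S / real T\<rceil>" unfolding m_def using x0 by simp
    have m_ge: "S / real T \<le> real m" unfolding mc using ceiling_correct[of "S / real T"] by linarith
    have m_lt: "real m < S / real T + 1" unfolding mc using ceiling_correct[of "S / real T"] by linarith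
    have m1: "1 \<le> m"
    proof -
      have "1 \<le> S / real T" using ST Tpos by simp
      thus ?thesis unfolding m_def by linarith
    qed
    have mK: "m \<le> K"
    proof -
      have "S / real T \<le> real K" using SKT Tpos by (simp add: divide_le_eq)
      hence "\<lceil>S / real T\<rceil> \<le> int K" by (simp add: ceiling_le_iff)
      thus ?thesis unfolding m_def by linarith
    qed
    have mT1: "S \<le> real m * real T" using m_ge Tpos by (simp add: divide_le_eq)
    have mT2: "real m * real T \<le> 2 * S"
    proof -
      have "real m * real T < (S / real T + 1) * real T" using m_lt Tpos by (intro mult_strict_right_mono) auto
      also have "\<dots> = S + real T" using Tpos by (simp add: field_simps)
      finally show ?thesis using ST by linarith
    qed
    have mTpos: "0 < real m * real T" using mT1 Spos by linarith
    define cc where "cc = sqrt (LL / (real m * real T)) / 2"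
    have ccpos: "0 < cc" unfolding cc_def using LL_pos mTpos by simp
    have ccg: "cc \<le> g s" if s: "s \<in> {1..T}" for s
    proof -
      have "LL / (real m * real T) \<le> LL / S" using LL_pos Spos mT1 by (intro divide_left_mono) auto
      hence "cc \<le> g T" unfolding cc_def g_def gamma_eq S_def by simp
      also have "g T \<le> g s" unfolding g_def sb_gamma_def using eta_mono[of s T xs] s by simp
      finally show ?thesis .
    qed
    have Xb: "cc * X \<le> Lam"
    proof -
      have "(\<Sum>s = 1..T. dev (wa T a m) s xs) = cc * X"
        unfolding X_def sum_distrib_left
      proof (intro sum.cong refl)
        fix s assume s: "s \<in> {1..T}"
        have "min (sqrt (LL / (real m * real T)) / 2) (sb_gamma K d Adv s xs) = cc"
          using ccg[OF s] unfolding cc_def g_def by simp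
        thus "dev (wa T a m) s xs = cc * (if a \<in> act Adv s xs then ht s xs a - lossv Loss s xs a else 0)"
          unfolding dev_wa by simp
      qed
      thus ?thesis using Ea[of m] m1 mK by simp
    qed
    have LLcc: "LL \<le> 3 * Sq * cc"
    proof -
      have sq1: "(3 * Sq * cc)^2 = 9 * (LL * S) * (LL / (real m * real T)) / 4"
        unfolding Sq_def cc_def using LL_pos Spos mTpos by (simp add: power_mult_distrib power_divide)
      have "4 * (real m * real T) \<le> 9 * S" using mT2 Spos by linarith
      hence "LL^2 \<le> 9 * (LL * S) * (LL / (real m * real T)) / 4"
        using LL_pos mTpos by (simp add: field_simps power2_eq_square)
      hence "LL^2 \<le> (3 * Sq * cc)^2" unfolding sq1 .
      moreover have "0 \<le> 3 * Sq * cc" using Sq0 ccpos by simp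
      ultimately show ?thesis by (rule power2_le_imp_le)
    qed
    have Xle: "X \<le> 6 * Sq"
    proof -
      have "cc * X \<le> 2 * LL" using Xb Lam1 by linarith
      also have "\<dots> \<le> 2 * (3 * Sq * cc)" using LLcc by linarith
      finally have "cc * X \<le> cc * (6 * Sq)" by (simp add: algebra_simps)
      thus ?thesis using ccpos by simp
    qed
    have lnK: "ln K / e T \<le> Sq"
    proof -
      have lnKLL: "ln (real K) \<le> LL" unfolding LL_def using K d0 d1
        by (subst ln_le_cancel_iff) (auto simp: field_simps)
      have lnK0: "0 \<le> ln (real K)" using K by simp
      have eT: "e T = sqrt (LL / S)" unfolding e_def eta_eq S_def ..
      have eTpos: "0 < e T" unfolding eT using LL_pos Spos by simp
      have "ln K / e T \<le> LL / e T" using lnKLL eTpos by (simp add: divide_right_mono)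
      also have "LL / e T = Sq"
      proof -
        have "e T * Sq = LL" unfolding eT Sq_def using LL_pos Spos
          by (simp add: real_sqrt_mult[symmetric])
        thus ?thesis using eTpos by (simp add: field_simps)
      qed
      finally show ?thesis .
    qed
    have LLSq: "LL \<le> Sq"
    proof -
      have "LL = sqrt (LL * LL)" using LL_pos by simp
      also have "\<dots> \<le> Sq" unfolding Sq_def using LLS LL_pos by (intro real_sqrt_le_mono mult_left_mono) auto
      finally show ?thesis .
    qed
    have sumsplit: "(\<Sum>s = 1..T. 2 * e s + 2 * (g s * H s)) = 2 * (\<Sum>s = 1..T. e s) + 2 * (\<Sum>s = 1..T. g s * H s)"
      by (simp add: sum.distrib sum_distrib_left)
    have "(\<Sum>s = 1..T. r s) \<le> 20 * Sq"
      using decomp pot Dle sumsplit se sgH YgH Xle lnK LLSq Lam1 by linarith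
    thus ?thesis unfolding reg Sq_def S_def .
  qed
qed

end

context sbx begin

definition WW :: "nat \<Rightarrow> (nat \<times> nat) option \<Rightarrow> nat \<Rightarrow> nat list \<Rightarrow> nat \<Rightarrow> real" where
  "WW T e = (case e of None \<Rightarrow> w0 | Some (a, m) \<Rightarrow> wa T a m)"

lemma WW_pre: "s - 1 \<le> n \<Longrightarrow> WW T e s (take n xs) = WW T e s xs"
  by (cases e) (auto simp: WW_def w0_def wa_def sb_gamma_take)

lemma WW_bnd: "0 \<le> WW T e s xs j \<and> WW T e s xs j \<le> sb_gamma K d Adv s xs"
proof (cases e)
  case None thus ?thesis using gamma_nonneg by (simp add: WW_def w0_def)
next
  case (Some p)
  obtain a m where p: "p = (a, m)" by (cases p)
  have "0 \<le> sqrt (LL / (real m * real T)) / 2" using LL_pos by simp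
  thus ?thesis using Some p gamma_nonneg by (auto simp: WW_def wa_def)
qed

lemma regret_K1:
  assumes xs: "xs \<in> set_pmf (sb_hist K d Adv Loss T)" and K1: "K = 1" and a: "a \<in> {1..K}"
  shows "regret Adv Loss T xs a = 0"
proof -
  have "(if a \<in> act Adv t xs then lossv Loss t xs (xs ! (t - 1)) - lossv Loss t xs a else 0) = 0"
    if t: "t \<in> {1..T}" for t
  proof -
    have hs: "\<forall>t'<T. xs ! t' \<in> act Adv (Suc t') xs" using hist_support[OF xs] by simp
    have "t - 1 < T" using t by auto
    hence "xs ! (t - 1) \<in> act Adv (Suc (t - 1)) xs" using hs by simp
    moreover have "Suc (t - 1) = t" using t by simp
    ultimately have "xs ! (t - 1) \<in> act Adv t xs" by simp
    hence "xs ! (t - 1) = 1" using act_sub[of t xs] K1 by auto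
    moreover have "a = 1" using a K1 by simp
    ultimately show ?thesis by simp
  qed
  thus ?thesis unfolding regret_def by simp
qed

lemma main_prob:
  "1 - d \<le> measure_pmf.prob (sb_hist K d Adv Loss T)
       {xs. \<forall>a\<in>{1..K}. regret Adv Loss T xs a
              \<le> 40 * sqrt (ln (real K / d) * (\<Sum>t = 1..T. real (card (act Adv t xs))))}"
  (is "_ \<le> measure_pmf.prob ?M ?G")
proof (cases "T = 0")
  case True
  hence "?G = UNIV" by (simp add: regret_def)
  thus ?thesis using d0 by simp
next
  case False
  hence T: "1 \<le> T" by simp
  define I where "I = insert None (Some ` ({1..K} \<times> {1..K}))"
  have finI: "finite I" unfolding I_def by simp
  define N where "N = real (card I)"
  have N1: "1 \<le> N" unfolding N_def using finI by (simp add: I_def Suc_le_eq card_gt_0_iff)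
  have NK: "N \<le> 1 + real K * real K"
  proof -
    have "card I \<le> Suc (card (Some ` ({1..K} \<times> {1..K})))" unfolding I_def by (rule card_insert_le_m1) auto
    also have "card (Some ` ({1..K} \<times> {1..K})) \<le> card ({1..K} \<times> {1..K})" by (rule card_image_le) simp
    also have "card ({1..K} \<times> ({1..K}::nat set)) = K * K" by (simp add: card_cartesian_product)
    finally have c: "card I \<le> 1 + K * K" by simp
    hence "real (card I) \<le> real (1 + K * K)" by (simp only: of_nat_le_iff)
    thus ?thesis unfolding N_def by simp
  qed
  define Lam where "Lam = ln (N / d)"
  have Lam0: "0 \<le> Lam" unfolding Lam_def using N1 d0 d1 by simp
  have Lam1: "Lam \<le> 2 * LL"
  proof -
    have Kp: "1 \<le> real K" using K by simp
    have "N / d \<le> (1 + real K * real K) / d" using NK d0 by (simp add: divide_right_mono)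
    also have "\<dots> \<le> 9 * (real K * real K) / d"
    proof (rule divide_right_mono)
      have "1 * 1 \<le> real K * real K" using Kp by (intro mult_mono) auto
      thus "1 + real K * real K \<le> 9 * (real K * real K)" by simp
      show "0 \<le> d" using d0 by simp
    qed
    also have "\<dots> \<le> 9 * (real K * real K) / (d * d)"
      using d0 d1 Kp by (intro divide_left_mono) (auto simp: mult_le_cancel_left1 intro: mult_pos_pos)
    also have "\<dots> = (3 * real K / d) ^ 2" by (simp add: power2_eq_square)
    finally have le: "N / d \<le> (3 * real K / d) ^ 2" .
    have "Lam \<le> ln ((3 * real K / d) ^ 2)" unfolding Lam_def using le N1 d0 K by (subst ln_le_cancel_iff) auto
    also have "\<dots> = 2 * LL" unfolding LL_def using K d0 by (simp add: ln_realpow)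
    finally show ?thesis .
  qed
  define Bad where "Bad e = {xs. N / d \<le> Zw (WW T e) T xs}" for e
  have pBad: "measure_pmf.prob ?M (Bad e) \<le> d / N" for e
  proof -
    have "measure_pmf.prob ?M (Bad e) \<le> 1 / (N / d)" unfolding Bad_def
    proof (rule pmf_markov)
      show "0 \<le> Zw (WW T e) T x" for x unfolding Zw_def by simp
      show "(\<integral>\<^sup>+x. ennreal (Zw (WW T e) T x) \<partial>measure_pmf ?M) \<le> 1"
        by (rule ix_super) (auto simp: WW_pre WW_bnd)
      show "0 < N / d" using N1 d0 by simp
    qed
    thus ?thesis by simp
  qed
  define U where "U = (\<Union>e\<in>I. Bad e)"
  have pU: "measure_pmf.prob ?M U \<le> d"
  proof -
    have "measure_pmf.prob ?M U \<le> (\<Sum>e\<in>I. measure_pmf.prob ?M (Bad e))"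
      unfolding U_def using finI by (intro measure_pmf.finite_measure_subadditive_finite) auto
    also have "\<dots> \<le> (\<Sum>e\<in>I. d / N)" using pBad by (intro sum_mono) auto
    also have "\<dots> = d" using N1 unfolding N_def by simp
    finally show ?thesis .
  qed
  have sub: "set_pmf ?M - U \<subseteq> ?G"
  proof
    fix xs assume xsU: "xs \<in> set_pmf ?M - U"
    hence xs: "xs \<in> set_pmf ?M" by simp
    have small: "(\<Sum>s = 1..T. dev (WW T e) s xs) \<le> Lam" if e: "e \<in> I" for e
    proof -
      have "xs \<notin> Bad e" using xsU e unfolding U_def by auto
      hence "exp (\<Sum>s = 1..T. dev (WW T e) s xs) < N / d" unfolding Bad_def Zw_def by simp
      hence "ln (exp (\<Sum>s = 1..T. dev (WW T e) s xs)) < ln (N / d)" using N1 d0 by (subst ln_less_cancel_iff) auto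
      hence "(\<Sum>s = 1..T. dev (WW T e) s xs) < ln (N / d)" by simp
      thus ?thesis unfolding Lam_def by simp
    qed
    show "xs \<in> ?G"
    proof (safe)
      fix a assume a: "a \<in> {1..K}"
      define S where "S = (\<Sum>t = 1..T. real (card (act Adv t xs)))"
      have S0: "0 \<le> S" unfolding S_def by (intro sum_nonneg) auto
      show "regret Adv Loss T xs a \<le> 40 * sqrt (ln (real K / d) * S)"
      proof (cases "K = 1")
        case True
        have "0 \<le> ln (real K / d)" using True d0 d1 by simp
        thus ?thesis using regret_K1[OF xs True a] S0 by simp
      next
        case False
        hence K2: "2 \<le> real K" using K by simp
        have E0: "(\<Sum>s = 1..T. dev w0 s xs) \<le> Lam" using small[of None] by (simp add: I_def WW_def)
        have Ea: "(\<Sum>s = 1..T. dev (wa T a m) s xs) \<le> Lam" if m: "m \<in> {1..K}" for m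
          using small[of "Some (a, m)"] a m by (simp add: I_def WW_def)
        have db: "regret Adv Loss T xs a \<le> 20 * sqrt (LL * S)"
          using det_bound[OF xs T a E0 Ea Lam0 Lam1] unfolding S_def SS_def by simp
        have lk: "ln 2 \<le> ln (real K / d)"
          using K2 d0 d1 by (subst ln_le_cancel_iff) (auto simp: field_simps intro: order_trans[OF K2])
        have l3: "ln 3 \<le> 2 * ln (2::real)"
        proof -
          have "ln (3::real) \<le> ln 4" by simp
          also have "ln (4::real) = 2 * ln 2" using ln_realpow[of 2 2] by simp
          finally show ?thesis .
        qed
        have LLle: "LL \<le> 3 * ln (real K / d)"
        proof -
          have kd: "0 < real K / d" using K d0 by simp
          have "3 * real K / d = 3 * (real K / d)" by simp
          hence "LL = ln (3 * (real K / d))" unfolding LL_def by simp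
          also have "\<dots> = ln 3 + ln (real K / d)" using ln_mult[of 3 "real K / d"] kd K d0 by simp
          finally have "LL = ln 3 + ln (real K / d)" .
          thus ?thesis using lk l3 by linarith
        qed
        have "sqrt (LL * S) \<le> sqrt (3 * ln (real K / d) * S)"
          using LLle S0 by (intro real_sqrt_le_mono mult_right_mono) auto
        also have "\<dots> = sqrt 3 * sqrt (ln (real K / d) * S)" by (simp add: real_sqrt_mult mult.assoc)
        also have "\<dots> \<le> 2 * sqrt (ln (real K / d) * S)"
        proof (rule mult_right_mono)
          show "sqrt 3 \<le> (2::real)" by (rule real_le_lsqrt) auto
          have "0 \<le> ln (2::real)" by simp
          hence "0 \<le> ln (real K / d)" using lk by linarith
          thus "0 \<le> sqrt (ln (real K / d) * S)" using S0 by simp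
        qed
        finally show ?thesis using db by linarith
      qed
    qed
  qed
  have "1 - d \<le> 1 - measure_pmf.prob ?M U" using pU by simp
  also have "\<dots> = measure_pmf.prob ?M (UNIV - U)"
    using measure_pmf.prob_compl[of U ?M] by simp
  also have "\<dots> = measure_pmf.prob ?M ((UNIV - U) \<inter> set_pmf ?M)" by (simp add: measure_Int_set_pmf)
  also have "(UNIV - U) \<inter> set_pmf ?M = set_pmf ?M - U" by auto
  also have "measure_pmf.prob ?M (set_pmf ?M - U) \<le> measure_pmf.prob ?M ?G"
    using sub by (intro measure_pmf.finite_measure_mono) auto
  finally show ?thesis .
qed

end

theorem theorem3p2:
  shows "\<exists>C :: real. \<forall>(K :: nat) (\<delta> :: real) Adv Loss (T :: nat).
     K \<ge> 1 \<longrightarrow> 0 < \<delta> \<longrightarrow> \<delta> < 1 \<longrightarrow>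
     (\<forall>t hs. Adv t hs \<noteq> {} \<and> Adv t hs \<subseteq> {1..K}) \<longrightarrow>
     (\<forall>t hs i. 0 \<le> Loss t hs i \<and> Loss t hs i \<le> 1) \<longrightarrow>
     measure_pmf.prob (sb_hist K \<delta> Adv Loss T)
       {xs. \<forall>a\<in>{1..K}. regret Adv Loss T xs a
              \<le> C * sqrt (ln (real K / \<delta>) * (\<Sum>t = 1..T. real (card (act Adv t xs))))}
       \<ge> 1 - \<delta>"
proof (intro exI[of _ 40] allI impI)
  fix K :: nat and \<delta> :: real and Adv :: "nat \<Rightarrow> nat list \<Rightarrow> nat set"
    and Loss :: "nat \<Rightarrow> nat list \<Rightarrow> nat \<Rightarrow> real" and T :: nat
  assume "K \<ge> 1" "0 < \<delta>" "\<delta> < 1" "\<forall>t hs. Adv t hs \<noteq> {} \<and> Adv t hs \<subseteq> {1..K}"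
    "\<forall>t hs i. 0 \<le> Loss t hs i \<and> Loss t hs i \<le> 1"
  then interpret sbx K \<delta> Adv Loss by unfold_locales auto
  show "measure_pmf.prob (sb_hist K \<delta> Adv Loss T)
       {xs. \<forall>a\<in>{1..K}. regret Adv Loss T xs a
              \<le> 40 * sqrt (ln (real K / \<delta>) * (\<Sum>t = 1..T. real (card (act Adv t xs))))}
       \<ge> 1 - \<delta>" using main_prob by simp
qed

end
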